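(* In the i.i.d. setting, consider Algorithm $\varepsilon$-Greedy-LCBT and let $a_n=\lceil\sqrt{n\ell_n}\rceil$. Let $\mathcal{E}_1$ be the event that $$|x^\top(\hat\theta_i-\theta)|\le\xi_i(x)\quad\text{for all }x\in\mathbb{R}^d\text{ and all }i\in\{a_n+1,\dots,n\}.$$ Let $g:=\sqrt{L\|V_{a_n}^{-1}\|_2}\,\big(\sigma\sqrt{d\log(n+n^2L/(d\beta))}+\sqrt{S\beta}\big)$. Let $\alpha^*$ satisfy $\mathbb{P}_{z\sim\mathcal{D}_x}(z^\top\theta\le\alpha^* )=1-\frac1n$. Then on $\mathcal{E}_1$, for every $i>a_n$ and every realization of $(\hat\theta_i,V_i,\mathcal{I}_i)$, $$\alpha^*-2g\le\alpha_i\le\alpha^*.$$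
   Context: Setting. Fix a horizon $n$ and dimension $d$. There is an unknown parameter $\theta\in\mathbb{R}^d$ with $\|\theta\|_2^2\le S$. For each $i\in[n]$ a feature vector $x_i\in\mathbb{R}^d$ is drawn independently from a distribution $\mathcal{D}_{x,i}$. Almost surely $\|x_i\|_2^2\le L$. The reward is $X_i=x_i^\top\theta\ge 0$. The noises $\eta_1,\dots,\eta_n$ are i.i.d. $\sigma$-sub-Gaussian and independent of the features, and $y_i=X_i+\eta_i$. i.i.d. setting: $\mathcal{D}_{x,i}=\mathcal{D}_x$ for all $i$. Quantities of Algorithm $\varepsilon$-Greedy-LCBT. Each stage $i$ is independently an exploration stage with probability $\varepsilon$ (else a decision stage). $\mathcal{I}_i$ is the set of exploration stages among $1,\dots,i$, and $\beta>0$. - $V_i=\sum_{t\in\mathcal{I}_i}x_tx_t^\top+\beta I_d$ and $\hat\theta_i=V_i^{-1}\sum_{t\in\mathcal{I}_i}y_tx_t$. - $\xi_i(x)=\sqrt{x^\top V_i^{-1}x}\,\big(\sigma\sqrt{d\log(n+n|\mathcal{I}_i|L/(d\beta))}+\sqrt{S\beta}\big)$. - $\alpha_i$ satisfies $\mathbb{P}_{z\sim\mathcal{D}_x}(z^\top\hat\theta_i-\xi_i(z)\le\alpha_i\mid\hat\theta_i,V_i,\mathcal{I}_i)=1-\frac1n$. The relevant distributions are assumed continuous, so that these quantiles exist and are unique. *)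

theory Defs
  imports "HOL-Analysis.Analysis" "HOL-Probability.Probability"
begin

definition expl_set :: "nat set \<Rightarrow> nat \<Rightarrow> nat set" where
  "expl_set I i = I \<inter> {1..i}"

definition outer :: "real^'d \<Rightarrow> real^'d^'d" where
  "outer v = (\<chi> j k. v $ j * v $ k)"

definition Vmat :: "real \<Rightarrow> (nat \<Rightarrow> real^'d) \<Rightarrow> nat set \<Rightarrow> nat \<Rightarrow> real^'d^'d" where
  "Vmat \<beta> x I i = (\<Sum>t\<in>expl_set I i. outer (x t)) + \<beta> *\<^sub>R mat 1"

definition theta_hat :: "real \<Rightarrow> (nat \<Rightarrow> real^'d) \<Rightarrow> (nat \<Rightarrow> real) \<Rightarrow> nat set \<Rightarrow> nat \<Rightarrow> real^'d" where
  "theta_hat \<beta> x y I i = matrix_inv (Vmat \<beta> x I i) *v (\<Sum>t\<in>expl_set I i. y t *\<^sub>R x t)"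

definition xi :: "nat \<Rightarrow> real \<Rightarrow> real \<Rightarrow> real \<Rightarrow> real \<Rightarrow> (nat \<Rightarrow> real^'d) \<Rightarrow> nat set \<Rightarrow> nat \<Rightarrow> real^'d \<Rightarrow> real" where
  "xi n \<sigma> S L \<beta> x I i z =
     sqrt (z \<bullet> (matrix_inv (Vmat \<beta> x I i) *v z)) *
     (\<sigma> * sqrt (real CARD('d) * ln (real n + real n * real (card (expl_set I i)) * L / (real CARD('d) * \<beta>)))
      + sqrt (S * \<beta>))"

end

theory Submission
  imports Defs
begin

definition psd :: "real^'d^'d \<Rightarrow> bool" where
  "psd A \<longleftrightarrow> (\<forall>v. 0 \<le> v \<bullet> (A *v v))"
definition symm :: "real^'d^'d \<Rightarrow> bool" where
  "symm A \<longleftrightarrow> transpose A = A"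

lemma matrix_inv_right:
  fixes A :: "real^'d^'d"
  assumes "invertible A" shows "A ** matrix_inv A = mat 1"
proof -
  have "\<exists>A'. A ** A' = mat 1 \<and> A' ** A = mat 1" using assms invertible_def by blast
  from someI_ex[OF this] show ?thesis unfolding matrix_inv_def by blast
qed

lemma matrix_inv_apply:
  fixes A :: "real^'d^'d"
  assumes "invertible A" shows "A *v (matrix_inv A *v z) = z"
  by (simp add: matrix_vector_mul_assoc matrix_inv_right[OF assms])

lemma symm_inner:
  fixes A :: "real^'d^'d"
  assumes "symm A" shows "u \<bullet> (A *v v) = (A *v u) \<bullet> v"
proof -
  have "u \<bullet> (A *v v) = (u v* A) \<bullet> v" by (simp add: dot_lmul_matrix)
  also have "u v* A = transpose A *v u" by simp
  finally show ?thesis using assms symm_def by metis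
qed

lemma outer_apply: "outer v *v u = (v \<bullet> u) *\<^sub>R v"
  by (simp add: outer_def matrix_vector_mult_def inner_vec_def vec_eq_iff sum_distrib_left mult.commute mult.left_commute)

lemma psd_outer: "psd (outer v)"
  by (simp add: psd_def outer_apply inner_commute)

lemma symm_outer: "symm (outer v)"
  by (simp add: symm_def outer_def transpose_def vec_eq_iff mult.commute)

lemma psd_add: "psd A \<Longrightarrow> psd B \<Longrightarrow> psd (A + B)"
  by (simp add: psd_def matrix_vector_mult_add_rdistrib inner_add_right add_nonneg_nonneg)

lemma symm_add: "symm A \<Longrightarrow> symm B \<Longrightarrow> symm (A + B)"
  by (simp add: symm_def transpose_def vec_eq_iff)

lemma psd_zero: "psd 0" by (simp add: psd_def)
lemma symm_zero: "symm 0" by (simp add: symm_def transpose_def vec_eq_iff)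

lemma psd_sum: "psd (\<Sum>t\<in>T. outer (f t))"
  by (induction T rule: infinite_finite_induct) (auto simp: psd_zero psd_add psd_outer)
lemma symm_sum: "symm (\<Sum>t\<in>T. outer (f t))"
  by (induction T rule: infinite_finite_induct) (auto simp: symm_zero symm_add symm_outer)

lemma scaled_id_apply: "(c *\<^sub>R mat 1 :: real^'d^'d) *v u = c *\<^sub>R u"
  by (metis scaleR_matrix_vector_assoc matrix_vector_mul_lid)

lemma symm_id: "symm (c *\<^sub>R mat 1 :: real^'d^'d)"
  by (simp add: symm_def transpose_def vec_eq_iff mat_def)

lemma psd_id: "c \<ge> 0 \<Longrightarrow> psd (c *\<^sub>R mat 1 :: real^'d^'d)"
  by (simp add: psd_def scaled_id_apply)

lemma var_bound:
  fixes A :: "real^'d^'d"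
  assumes "symm A" "psd A" "invertible A"
  shows "2 * (z \<bullet> u) - u \<bullet> (A *v u) \<le> z \<bullet> (matrix_inv A *v z)"
proof -
  define v where "v = matrix_inv A *v z"
  have z: "A *v v = z" using matrix_inv_apply[OF assms(3)] v_def by simp
  have p: "0 \<le> (u - v) \<bullet> (A *v (u - v))" using assms(2) psd_def by blast
  have q: "(u - v) \<bullet> (A *v (u - v)) = u \<bullet> (A *v u) - u \<bullet> (A *v v) - (v \<bullet> (A *v u) - v \<bullet> (A *v v))"
    by (simp only: matrix_vector_mult_diff_distrib inner_diff_left inner_diff_right)
  have s: "v \<bullet> (A *v u) = u \<bullet> (A *v v)"
    using symm_inner[OF assms(1), of v u] inner_commute by metis
  have zu: "z \<bullet> u = u \<bullet> (A *v v)" using z inner_commute by metis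
  have zv: "z \<bullet> (matrix_inv A *v z) = v \<bullet> (A *v v)"
    using z v_def inner_commute by metis
  show ?thesis using p q s zu zv by linarith
qed

lemma inv_mono:
  fixes A P :: "real^'d^'d"
  assumes "symm A" "psd A" "invertible A" "psd P" "invertible (A + P)"
  shows "z \<bullet> (matrix_inv (A + P) *v z) \<le> z \<bullet> (matrix_inv A *v z)"
proof -
  define u where "u = matrix_inv (A + P) *v z"
  have z: "(A + P) *v u = z" using matrix_inv_apply[OF assms(5)] u_def by simp
  have "z \<bullet> u = (A *v u) \<bullet> u + (P *v u) \<bullet> u"
    using z by (metis matrix_vector_mult_add_rdistrib inner_add_left)
  then have zu: "z \<bullet> u = u \<bullet> (A *v u) + u \<bullet> (P *v u)" by (simp only: inner_commute)
  have "0 \<le> u \<bullet> (P *v u)" using assms(4) psd_def by blast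
  moreover have "2 * (z \<bullet> u) - u \<bullet> (A *v u) \<le> z \<bullet> (matrix_inv A *v z)"
    using var_bound[OF assms(1-3)] .
  ultimately show ?thesis unfolding u_def[symmetric] using zu by linarith
qed

lemma Vmat_symm: "symm (Vmat \<beta> x I i)"
  unfolding Vmat_def by (intro symm_add symm_sum symm_id)

lemma Vmat_psd: "\<beta> \<ge> 0 \<Longrightarrow> psd (Vmat \<beta> x I i)"
  unfolding Vmat_def by (intro psd_add psd_sum psd_id)

lemma Vmat_posdef:
  assumes "\<beta> > 0" shows "\<beta> * (v \<bullet> v) \<le> v \<bullet> (Vmat \<beta> x I i *v v)"
proof -
  have "0 \<le> v \<bullet> ((\<Sum>t\<in>expl_set I i. outer (x t)) *v v)" using psd_sum psd_def by blast
  then show ?thesis unfolding Vmat_def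
    by (simp add: matrix_vector_mult_add_rdistrib inner_add_right scaled_id_apply)
qed

lemma Vmat_invertible:
  assumes "\<beta> > 0" shows "invertible (Vmat \<beta> x I i)"
proof -
  have "\<forall>v. Vmat \<beta> x I i *v v = 0 \<longrightarrow> v = 0"
  proof (intro allI impI)
    fix v assume "Vmat \<beta> x I i *v v = 0"
    then have "\<beta> * (v \<bullet> v) \<le> 0" using Vmat_posdef[OF assms, of v x I i] by simp
    then have "v \<bullet> v \<le> 0" using assms by (simp add: mult_le_0_iff)
    then have "v \<bullet> v = 0" using inner_ge_zero[of v] by linarith
    then show "v = 0" by simp
  qed
  then show ?thesis using matrix_left_invertible_ker invertible_left_inverse by blast
qed

lemma Vmat_split:
  assumes "j \<le> k"
  shows "Vmat \<beta> x I k = Vmat \<beta> x I j + (\<Sum>t\<in>expl_set I k - expl_set I j. outer (x t))"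
proof -
  have sub: "expl_set I j \<subseteq> expl_set I k" using assms by (auto simp: expl_set_def)
  have fin: "finite (expl_set I k)" by (simp add: expl_set_def)
  show ?thesis unfolding Vmat_def
    using sum.subset_diff[OF sub fin, of "\<lambda>t. outer (x t)"] by (simp only: add_ac)
qed

lemma Vmat_inv_mono:
  assumes "\<beta> > 0" "j \<le> k"
  shows "z \<bullet> (matrix_inv (Vmat \<beta> x I k) *v z) \<le> z \<bullet> (matrix_inv (Vmat \<beta> x I j) *v z)"
proof -
  have "invertible (Vmat \<beta> x I j + (\<Sum>t\<in>expl_set I k - expl_set I j. outer (x t)))"
    using Vmat_invertible[OF assms(1), of x I k] unfolding Vmat_split[OF assms(2)] .
  from inv_mono[OF Vmat_symm Vmat_psd[of \<beta>] Vmat_invertible[OF assms(1)] psd_sum this] assms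
  show ?thesis by (simp only: Vmat_split[OF assms(2), of \<beta> x I] less_imp_le)
qed


lemma cont_mv: "continuous_on UNIV (\<lambda>z::real^'d. M *v z)"
  using linear_continuous_on[OF matrix_vector_mul_bounded_linear[of M]] by simp

lemma cont_xi: "continuous_on UNIV (\<lambda>z. xi n \<sigma> S L \<beta> x I i z)"
  unfolding xi_def by (intro continuous_intros cont_mv)

lemma cont_f: "continuous_on UNIV (\<lambda>z::real^'d. z \<bullet> th - xi n \<sigma> S L \<beta> x I i z)"
  by (intro continuous_intros cont_xi)

lemma xi_bound:
  fixes z :: "real^'d"
  assumes "\<beta> > 0" "\<sigma> \<ge> 0" "S \<ge> 0" "L \<ge> 0" "n \<ge> 1" "(norm z)\<^sup>2 \<le> L" "a \<le> i" "i \<le> n"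
  shows "xi n \<sigma> S L \<beta> x I i z \<le> sqrt (L * onorm (\<lambda>v. matrix_inv (Vmat \<beta> x I a) *v v)) *
                (\<sigma> * sqrt (real CARD('d) * ln (real n + (real n)\<^sup>2 * L / (real CARD('d) * \<beta>)))
                 + sqrt (S * \<beta>))"
proof -
  define M where "M = matrix_inv (Vmat \<beta> x I a)"
  define on where "on = onorm (\<lambda>v. M *v v)"
  define q where "q = z \<bullet> (matrix_inv (Vmat \<beta> x I i) *v z)"
  define d where "d = real CARD('d)"
  define ci where "ci = \<sigma> * sqrt (d * ln (real n + real n * real (card (expl_set I i)) * L / (d * \<beta>))) + sqrt (S * \<beta>)"
  define cg where "cg = \<sigma> * sqrt (d * ln (real n + (real n)\<^sup>2 * L / (d * \<beta>))) + sqrt (S * \<beta>)"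
  have d: "d > 0" unfolding d_def by simp
  have on0: "on \<ge> 0" unfolding on_def by (rule onorm_pos_le) simp
  have "q \<le> z \<bullet> (M *v z)" unfolding q_def M_def by (rule Vmat_inv_mono[OF assms(1,7)])
  also have "\<dots> \<le> norm z * norm (M *v z)" by (rule norm_cauchy_schwarz)
  also have "\<dots> \<le> norm z * (on * norm z)"
    unfolding on_def by (intro mult_left_mono onorm) simp_all
  also have "\<dots> = on * (norm z)\<^sup>2" by (simp add: power2_eq_square)
  also have "\<dots> \<le> on * L" using assms(6) on0 by (simp add: mult_left_mono)
  finally have q: "sqrt q \<le> sqrt (L * on)" by (simp add: mult.commute)
  have card: "card (expl_set I i) \<le> n"
  proof -
    have "card (expl_set I i) \<le> card {1..i}" unfolding expl_set_def by (intro card_mono) auto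
    then show ?thesis using assms(8) by simp
  qed
  have nn: "real n * real (card (expl_set I i)) \<le> (real n)\<^sup>2"
    using card by (simp add: power2_eq_square mult_left_mono)
  have A0: "0 \<le> real n * real (card (expl_set I i)) * L / (d * \<beta>)"
    using d assms by simp
  have A1: "real n * real (card (expl_set I i)) * L / (d * \<beta>) \<le> (real n)\<^sup>2 * L / (d * \<beta>)"
    using nn d assms by (intro divide_right_mono mult_right_mono) simp_all
  have n1: "real n \<ge> 1" using assms by simp
  have ln0: "0 \<le> ln (real n + real n * real (card (expl_set I i)) * L / (d * \<beta>))"
    using n1 A0 by simp
  have lnle: "ln (real n + real n * real (card (expl_set I i)) * L / (d * \<beta>)) \<le> ln (real n + (real n)\<^sup>2 * L / (d * \<beta>))"
    using n1 A0 A1 by simp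
  have ci0: "0 \<le> ci" unfolding ci_def using ln0 d assms by simp
  have cicg: "ci \<le> cg" unfolding ci_def cg_def using lnle d assms
    by (intro add_right_mono mult_left_mono real_sqrt_le_mono) simp_all
  have "sqrt q * ci \<le> sqrt (L * on) * ci" using q ci0 by (rule mult_right_mono)
  also have "\<dots> \<le> sqrt (L * on) * cg" using cicg on0 assms(4) by (intro mult_left_mono) simp_all
  finally show ?thesis unfolding xi_def q_def ci_def cg_def d_def on_def M_def .
qed

theorem mainTheorem14:
  fixes n :: nat and ell S L \<sigma> \<beta> :: real
    and \<theta> :: "real^'d" and D :: "(real^'d) measure"
    and x :: "nat \<Rightarrow> real^'d" and \<eta> y :: "nat \<Rightarrow> real"
    and I :: "nat set" and i :: nat and \<alpha>i \<alpha>star :: real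
  defines "a \<equiv> nat \<lceil>sqrt (real n * ell)\<rceil>"
  defines "g \<equiv> sqrt (L * onorm (\<lambda>v. matrix_inv (Vmat \<beta> x I a) *v v)) *
                (\<sigma> * sqrt (real CARD('d) * ln (real n + (real n)\<^sup>2 * L / (real CARD('d) * \<beta>)))
                 + sqrt (S * \<beta>))"
  assumes n_pos: "n \<ge> 1"
    and \<beta>_pos: "\<beta> > 0" and \<sigma>_nonneg: "\<sigma> \<ge> 0" and ell_nonneg: "ell \<ge> 0"
    and theta_bound: "(norm \<theta>)\<^sup>2 \<le> S"
    and D_prob: "prob_space D" and D_sets: "sets D = sets borel"
    and D_bounded: "AE z in D. (norm z)\<^sup>2 \<le> L"
    and D_reward: "AE z in D. z \<bullet> \<theta> \<ge> 0"
    and x_bounded: "\<forall>t\<in>{1..n}. (norm (x t))\<^sup>2 \<le> L"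
    and x_reward: "\<forall>t\<in>{1..n}. x t \<bullet> \<theta> \<ge> 0"
    and y_def: "\<forall>t\<in>{1..n}. y t = x t \<bullet> \<theta> + \<eta> t"
    and I_sub: "I \<subseteq> {1..n}"
    and E1: "\<forall>z. \<forall>j\<in>{a+1..n}.
               \<bar>z \<bullet> (theta_hat \<beta> x y I j - \<theta>)\<bar> \<le> xi n \<sigma> S L \<beta> x I j z"
    and i_range: "i \<in> {a+1..n}"
    and alpha_i: "\<forall>\<alpha>. measure D {z \<in> space D. z \<bullet> theta_hat \<beta> x y I i - xi n \<sigma> S L \<beta> x I i z \<le> \<alpha>}
                        = 1 - 1 / real n \<longleftrightarrow> \<alpha> = \<alpha>i"
    and alpha_star: "\<forall>\<alpha>. measure D {z \<in> space D. z \<bullet> \<theta> \<le> \<alpha>} = 1 - 1 / real n \<longleftrightarrow> \<alpha> = \<alpha>star"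
  shows "\<alpha>star - 2 * g \<le> \<alpha>i \<and> \<alpha>i \<le> \<alpha>star"
proof -
  interpret P: prob_space D by (rule D_prob)
  have sp: "space D = UNIV" using sets_eq_imp_space_eq[OF D_sets] by simp
  have S0: "S \<ge> 0" using theta_bound zero_le_power2[of "norm \<theta>"] by linarith
  have L0: "L \<ge> 0"
  proof (rule ccontr)
    assume "\<not> L \<ge> 0"
    then have h: "(norm z)\<^sup>2 \<le> L \<Longrightarrow> False" for z :: "real^'d"
      using zero_le_power2[of "norm z"] by linarith
    from D_bounded have "AE z in D. False" by (rule eventually_mono) (rule h)
    then show False using P.AE_False by simp
  qed
  have ia: "a \<le> i" "i \<le> n" using i_range by auto
  define th where "th = theta_hat \<beta> x y I i"
  define f where "f = (\<lambda>z. z \<bullet> th - xi n \<sigma> S L \<beta> x I i z)"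
  define F where "F = (\<lambda>\<alpha>. measure D {z \<in> space D. z \<bullet> \<theta> \<le> \<alpha>})"
  define G where "G = (\<lambda>\<alpha>. measure D {z \<in> space D. f z \<le> \<alpha>})"
  have Fm: "{z \<in> space D. z \<bullet> \<theta> \<le> \<alpha>} \<in> sets D" for \<alpha>
  proof -
    have "closed {z::real^'d. z \<bullet> \<theta> \<le> \<alpha>}"
      by (intro closed_Collect_le continuous_intros)
    then show ?thesis using D_sets sp borel_closed by auto
  qed
  have Gm: "{z \<in> space D. f z \<le> \<alpha>} \<in> sets D" for \<alpha>
  proof -
    have "closed {z::real^'d. f z \<le> \<alpha>}"
      unfolding f_def by (intro closed_Collect_le cont_f continuous_intros)
    then show ?thesis using D_sets sp borel_closed by auto
  qed
  have Fmono: "\<alpha>1 \<le> \<alpha>2 \<Longrightarrow> F \<alpha>1 \<le> F \<alpha>2" for \<alpha>1 \<alpha>2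
    unfolding F_def by (intro P.finite_measure_mono Fm) auto
  have Gmono: "\<alpha>1 \<le> \<alpha>2 \<Longrightarrow> G \<alpha>1 \<le> G \<alpha>2" for \<alpha>1 \<alpha>2
    unfolding G_def by (intro P.finite_measure_mono Gm) auto
  have Fs: "F \<alpha> = 1 - 1 / real n \<longleftrightarrow> \<alpha> = \<alpha>star" for \<alpha>
    using alpha_star unfolding F_def by blast
  have Gs: "G \<alpha> = 1 - 1 / real n \<longleftrightarrow> \<alpha> = \<alpha>i" for \<alpha>
    using alpha_i unfolding G_def f_def th_def by blast
  have E1i: "\<bar>z \<bullet> (th - \<theta>)\<bar> \<le> xi n \<sigma> S L \<beta> x I i z" for z
    using E1 i_range unfolding th_def by blast
  have fup: "f z \<le> z \<bullet> \<theta>" for z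
    using E1i[of z] unfolding f_def by (simp add: inner_diff_right)
  have FG: "F \<alpha> \<le> G \<alpha>" for \<alpha>
    unfolding F_def G_def using fup by (intro P.finite_measure_mono Gm) (auto intro: order_trans)
  have up: "\<alpha>i \<le> \<alpha>star"
  proof (rule ccontr)
    assume "\<not> \<alpha>i \<le> \<alpha>star"
    then have "G \<alpha>star \<le> G \<alpha>i" by (intro Gmono) simp
    moreover have "F \<alpha>star \<le> G \<alpha>star" by (rule FG)
    moreover have "F \<alpha>star = 1 - 1 / real n" "G \<alpha>i = 1 - 1 / real n" using Fs Gs by simp_all
    ultimately have "G \<alpha>star = 1 - 1 / real n" by linarith
    then show False using Gs \<open>\<not> \<alpha>i \<le> \<alpha>star\<close> by simp
  qed
  have xb: "(norm z)\<^sup>2 \<le> L \<Longrightarrow> xi n \<sigma> S L \<beta> x I i z \<le> g" for z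
    unfolding g_def using xi_bound[OF \<beta>_pos \<sigma>_nonneg S0 L0 n_pos _ ia] by blast
  have flow: "(norm z)\<^sup>2 \<le> L \<Longrightarrow> z \<bullet> \<theta> - 2 * g \<le> f z" for z
    using E1i[of z] xb[of z] unfolding f_def by (simp add: inner_diff_right abs_le_iff)
  have GF: "G \<alpha> \<le> F (\<alpha> + 2 * g)" for \<alpha>
    unfolding F_def G_def
  proof (intro P.finite_measure_mono_AE Fm)
    show "AE z in D. z \<in> {z \<in> space D. f z \<le> \<alpha>} \<longrightarrow> z \<in> {z \<in> space D. z \<bullet> \<theta> \<le> \<alpha> + 2 * g}"
      using D_bounded by (rule AE_mp) (auto intro!: AE_I2 dest: flow)
  qed
  have low: "\<alpha>star - 2 * g \<le> \<alpha>i"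
  proof (rule ccontr)
    assume a: "\<not> \<alpha>star - 2 * g \<le> \<alpha>i"
    then have "F (\<alpha>i + 2 * g) \<le> F \<alpha>star" by (intro Fmono) simp
    moreover have "G \<alpha>i \<le> F (\<alpha>i + 2 * g)" by (rule GF)
    moreover have "F \<alpha>star = 1 - 1 / real n" "G \<alpha>i = 1 - 1 / real n" using Fs Gs by simp_all
    ultimately have "F (\<alpha>i + 2 * g) = 1 - 1 / real n" by linarith
    then show False using Fs a by simp
  qed
  show ?thesis using up low by simp
qed

end
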